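(* Let $L \in \mathbb{N}$, $q \in [1,\infty]$, $c > 0$, and $N_0,\dots,N_L \in \mathbb{N}$. Then every $R(\Phi) \in \mathcal{H}_{(N_0,\dots,N_L),c}^q$ satisfies \[ \mathrm{Lip}_{\ell^2} ( R(\Phi) ) \leq \begin{cases} c^{L} & \text{if } q \leq 2, \\ c^{L} \cdot (\sqrt{N_0 N_L} \cdot N_{1} \cdots N_{L-1})^{1 - 2 / q} & \text{if } q \geq 2 . \end{cases} \]
   Context: $\varrho(x)=\max\{0,x\}$ componentwise. For $\Phi=((W^i,b^i))_{i=1}^L$, $W^i\in\mathbb{R}^{N_i\times N_{i-1}}$, $b^i\in\mathbb{R}^{N_i}$, the realization $R(\Phi):\mathbb{R}^{N_0}\to\mathbb{R}^{N_L}$ is $R(\Phi)(x)=x^L$ with $x^0=x$, $x^i=\varrho(W^ix^{i-1}+b^i)$ for $1\le i\le L-1$, $x^L=W^Lx^{L-1}+b^L$. For matrices/vectors $\|\cdot\|_{\ell^q}$ is the entrywise $\ell^q$ norm (max absolute entry for $q=\infty$), $\|\Phi\|_{\ell^q}=\max_i\max\{\|W^i\|_{\ell^q},\|b^i\|_{\ell^q}\}$, and $\mathcal{H}^q_{(N_0,\dots,N_L),c}=\{R(\Phi):\|\Phi\|_{\ell^q}\le c\}$. For $f:\mathbb{R}^d\to\mathbb{R}^k$, $\mathrm{Lip}_{\ell^2}(f)=\sup_{x\ne y}\|f(x)-f(y)\|_{\ell^2}/\|x-y\|_{\ell^2}$. For $q=\infty$, $2/q=0$. *)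

theory Defs
  imports "HOL-Analysis.Analysis"
begin

text \<open>Vectors in R^n are represented as functions nat => real, where only the
coordinates 0..n-1 are meaningful; the space R^n is the set of such functions
vanishing outside {..<n}.  Matrices W in R^(m x n) are functions nat => nat => real
(row, column), of which only entries with row < m, column < n are meaningful.
A network Phi = ((W^i,b^i)), i = 1..L, is given by W :: nat => nat => nat => real
(layer, row, column) and b :: nat => nat => real (layer, row), with widths N 0, ..., N L.\<close>

definition vecspace :: "nat \<Rightarrow> (nat \<Rightarrow> real) set" where
  "vecspace n = {x. \<forall>i\<ge>n. x i = 0}"

definition relu :: "real \<Rightarrow> real" where
  "relu t = max 0 t"

definition affine_map :: "(nat \<Rightarrow> nat \<Rightarrow> real) \<Rightarrow> (nat \<Rightarrow> real) \<Rightarrow> nat \<Rightarrow> nat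
    \<Rightarrow> (nat \<Rightarrow> real) \<Rightarrow> (nat \<Rightarrow> real)" where
  "affine_map A v n m x = (\<lambda>i. if i < m then (\<Sum>j<n. A i j * x j) + v i else 0)"

fun nn_state :: "nat \<Rightarrow> (nat \<Rightarrow> nat) \<Rightarrow> (nat \<Rightarrow> nat \<Rightarrow> nat \<Rightarrow> real) \<Rightarrow> (nat \<Rightarrow> nat \<Rightarrow> real)
    \<Rightarrow> (nat \<Rightarrow> real) \<Rightarrow> nat \<Rightarrow> (nat \<Rightarrow> real)" where
  "nn_state L Ns W b x 0 = (\<lambda>i. if i < Ns 0 then x i else 0)"
| "nn_state L Ns W b x (Suc k) =
     (let z = affine_map (W (Suc k)) (b (Suc k)) (Ns k) (Ns (Suc k)) (nn_state L Ns W b x k)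
      in if Suc k < L then (\<lambda>i. relu (z i)) else z)"

definition realization :: "nat \<Rightarrow> (nat \<Rightarrow> nat) \<Rightarrow> (nat \<Rightarrow> nat \<Rightarrow> nat \<Rightarrow> real)
    \<Rightarrow> (nat \<Rightarrow> nat \<Rightarrow> real) \<Rightarrow> (nat \<Rightarrow> real) \<Rightarrow> (nat \<Rightarrow> real)" where
  "realization L N W b x = nn_state L N W b x L"

definition lq_norm :: "ereal \<Rightarrow> 'a set \<Rightarrow> ('a \<Rightarrow> real) \<Rightarrow> real" where
  "lq_norm q A f =
     (if q = \<infinity> then (if A = {} then 0 else Max ((\<lambda>a. \<bar>f a\<bar>) ` A))
      else (\<Sum>a\<in>A. \<bar>f a\<bar> powr real_of_ereal q) powr (1 / real_of_ereal q))"

definition mat_lq_norm :: "ereal \<Rightarrow> nat \<Rightarrow> nat \<Rightarrow> (nat \<Rightarrow> nat \<Rightarrow> real) \<Rightarrow> real" where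
  "mat_lq_norm q m n A = lq_norm q ({..<m} \<times> {..<n}) (\<lambda>(i,j). A i j)"

definition vec_lq_norm :: "ereal \<Rightarrow> nat \<Rightarrow> (nat \<Rightarrow> real) \<Rightarrow> real" where
  "vec_lq_norm q m v = lq_norm q {..<m} v"

definition net_lq_norm :: "ereal \<Rightarrow> nat \<Rightarrow> (nat \<Rightarrow> nat) \<Rightarrow> (nat \<Rightarrow> nat \<Rightarrow> nat \<Rightarrow> real)
    \<Rightarrow> (nat \<Rightarrow> nat \<Rightarrow> real) \<Rightarrow> real" where
  "net_lq_norm q L N W b =
     Max ((\<lambda>i. max (mat_lq_norm q (N i) (N (i - 1)) (W i)) (vec_lq_norm q (N i) (b i))) ` {1..L})"

definition l2norm :: "nat \<Rightarrow> (nat \<Rightarrow> real) \<Rightarrow> real" where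
  "l2norm n x = sqrt (\<Sum>i<n. (x i)\<^sup>2)"

definition lip_l2 :: "nat \<Rightarrow> nat \<Rightarrow> ((nat \<Rightarrow> real) \<Rightarrow> (nat \<Rightarrow> real)) \<Rightarrow> ereal" where
  "lip_l2 d k f = Sup {ereal (l2norm k (\<lambda>i. f x i - f y i) / l2norm d (\<lambda>i. x i - y i)) | x y.
                        x \<in> vecspace d \<and> y \<in> vecspace d \<and> x \<noteq> y}"

definition lip_exponent :: "ereal \<Rightarrow> real" where
  "lip_exponent q = (if q = \<infinity> then 1 else 1 - 2 / real_of_ereal q)"

end

theory Submission
  imports Defs
begin


lemma gA:
  fixes f :: "'a \<Rightarrow> real" and p :: real
  assumes S: "finite S" and p1: "1 \<le> p" and p2: "p \<le> 2"
  shows "sqrt (\<Sum>a\<in>S. (f a)\<^sup>2) \<le> (\<Sum>a\<in>S. \<bar>f a\<bar> powr p) powr (1/p)"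
proof -
  define T where "T = (\<Sum>a\<in>S. \<bar>f a\<bar> powr p)"
  have T0: "T \<ge> 0" unfolding T_def by (intro sum_nonneg) auto
  show ?thesis
  proof (cases "T = 0")
    case True
    then have "\<forall>a\<in>S. \<bar>f a\<bar> powr p = 0" using S unfolding T_def
      by (subst sum_nonneg_eq_0_iff[symmetric]) auto
    then have "\<forall>a\<in>S. f a = 0" by simp
    then show ?thesis by simp
  next
    case False
    define M where "M = T powr (1/p)"
    have Mpos: "M > 0" using False T0 unfolding M_def by simp
    have MP: "M powr p = T" unfolding M_def using T0 p1 by (simp add: powr_powr)
    have fa: "\<bar>f a\<bar> \<le> M" if "a \<in> S" for a
    proof -
      have "\<bar>f a\<bar> powr p \<le> T" unfolding T_def using S that
        by (intro member_le_sum) auto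
      then have "(\<bar>f a\<bar> powr p) powr (1/p) \<le> T powr (1/p)"
        by (intro powr_mono2) (use p1 in auto)
      then show ?thesis unfolding M_def using p1 by (simp add: powr_powr)
    qed
    have "(\<Sum>a\<in>S. (f a / M)\<^sup>2) \<le> (\<Sum>a\<in>S. (\<bar>f a\<bar> / M) powr p)"
    proof (intro sum_mono)
      fix a assume "a \<in> S"
      have u: "\<bar>f a\<bar> / M \<le> 1" "0 \<le> \<bar>f a\<bar> / M" using fa[OF \<open>a\<in>S\<close>] Mpos by auto
      have "(f a / M)\<^sup>2 = (\<bar>f a\<bar> / M) powr 2"
        using Mpos by (simp add: powr_numeral power_abs power_divide)
      also have "\<dots> \<le> (\<bar>f a\<bar> / M) powr p" by (rule powr_mono') (use u p2 in auto)
      finally show "(f a / M)\<^sup>2 \<le> (\<bar>f a\<bar> / M) powr p" .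
    qed
    also have "\<dots> = (\<Sum>a\<in>S. \<bar>f a\<bar> powr p) / M powr p"
      by (simp add: powr_divide sum_divide_distrib)
    also have "\<dots> = 1" using MP False T_def by simp
    finally have "(\<Sum>a\<in>S. (f a)\<^sup>2) / M\<^sup>2 \<le> 1"
      by (simp add: power_divide sum_divide_distrib)
    then have "(\<Sum>a\<in>S. (f a)\<^sup>2) \<le> M\<^sup>2" using Mpos by simp
    then have "sqrt (\<Sum>a\<in>S. (f a)\<^sup>2) \<le> sqrt (M\<^sup>2)" by (rule real_sqrt_le_mono)
    then show ?thesis using Mpos unfolding M_def T_def by simp
  qed
qed

lemma young1:
  fixes t r :: real
  assumes "t \<ge> 0" "r \<ge> 1"
  shows "t \<le> t powr r / r + (1 - 1/r)"
proof (cases "t = 0")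
  case True then show ?thesis using assms by simp
next
  case False
  have "(t powr r) powr (1/r) * 1 powr (1 - 1/r) \<le> (1/r) * t powr r + (1 - 1/r) * 1"
    by (rule Youngs_inequality_0) (use assms False in auto)
  then show ?thesis using assms False by (simp add: powr_powr)
qed

lemma gB:
  fixes f :: "'a \<Rightarrow> real" and p :: real
  assumes S: "finite S" and p2: "2 \<le> p"
  shows "sqrt (\<Sum>a\<in>S. (f a)\<^sup>2) \<le> real (card S) powr (1/2 - 1/p) * (\<Sum>a\<in>S. \<bar>f a\<bar> powr p) powr (1/p)"
proof -
  define T where "T = (\<Sum>a\<in>S. \<bar>f a\<bar> powr p)"
  define n where "n = real (card S)"
  have T0: "T \<ge> 0" unfolding T_def by (intro sum_nonneg) auto
  show ?thesis
  proof (cases "T = 0 \<or> S = {}")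
    case True
    then have "\<forall>a\<in>S. \<bar>f a\<bar> powr p = 0" using S unfolding T_def
      by (subst sum_nonneg_eq_0_iff[symmetric]) auto
    then have "\<forall>a\<in>S. f a = 0" by simp
    then show ?thesis by simp
  next
    case False
    then have Tp: "T > 0" and np: "n > 0" using T0 S unfolding n_def by (auto simp: card_gt_0_iff)
    define M where "M = (T / n) powr (1/p)"
    have Mpos: "M > 0" using Tp np unfolding M_def by simp
    have MP: "M powr p = T / n" unfolding M_def using Tp np p2 by (simp add: powr_powr)
    define r where "r = p / 2"
    have r1: "r \<ge> 1" using p2 unfolding r_def by simp
    have "(\<Sum>a\<in>S. (f a)\<^sup>2 / M\<^sup>2) \<le> (\<Sum>a\<in>S. ((f a)\<^sup>2 / M\<^sup>2) powr r / r + (1 - 1/r))"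
      by (intro sum_mono young1 r1) auto
    also have "\<dots> = (\<Sum>a\<in>S. (\<bar>f a\<bar> powr p / M powr p)) / r + n * (1 - 1/r)"
    proof -
      have "((f a)\<^sup>2 / M\<^sup>2) powr r = \<bar>f a\<bar> powr p / M powr p" for a
      proof -
        have "((f a)\<^sup>2 / M\<^sup>2) powr r = ((\<bar>f a\<bar> / M) powr 2) powr r"
          using Mpos by (simp add: powr_numeral power_abs power_divide)
        also have "\<dots> = (\<bar>f a\<bar> / M) powr p" by (simp add: powr_powr r_def)
        finally show ?thesis by (simp add: powr_divide)
      qed
      then show ?thesis by (simp add: sum.distrib sum_divide_distrib n_def)
    qed
    also have "\<dots> = n"
    proof -
      have "(\<Sum>a\<in>S. (\<bar>f a\<bar> powr p / M powr p)) = T / M powr p"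
        unfolding T_def by (simp add: sum_divide_distrib)
      also have "\<dots> = n" using MP Tp np by simp
      finally show ?thesis using r1 by (simp add: field_simps)
    qed
    finally have "(\<Sum>a\<in>S. (f a)\<^sup>2) / M\<^sup>2 \<le> n" by (simp add: sum_divide_distrib)
    then have le: "(\<Sum>a\<in>S. (f a)\<^sup>2) \<le> n * M\<^sup>2" using Mpos by (simp add: field_simps)
    have "sqrt (\<Sum>a\<in>S. (f a)\<^sup>2) \<le> sqrt (n * M\<^sup>2)" by (rule real_sqrt_le_mono[OF le])
    also have "\<dots> = n powr (1/2) * M" using np Mpos by (simp add: real_sqrt_mult powr_half_sqrt)
    also have "\<dots> = n powr (1/2 - 1/p) * T powr (1/p)"
      unfolding M_def using np Tp by (simp add: powr_divide powr_diff)
    finally show ?thesis unfolding n_def T_def .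
  qed
qed

lemma gC:
  fixes f :: "'a \<Rightarrow> real"
  assumes S: "finite S"
  shows "sqrt (\<Sum>a\<in>S. (f a)\<^sup>2) \<le> sqrt (real (card S)) * (if S = {} then 0 else Max ((\<lambda>a. \<bar>f a\<bar>) ` S))"
proof (cases "S = {}")
  case True then show ?thesis by simp
next
  case False
  define M where "M = Max ((\<lambda>a. \<bar>f a\<bar>) ` S)"
  have "\<bar>f a\<bar> \<le> M" if "a \<in> S" for a unfolding M_def using S that by (intro Max_ge) auto
  then have "(\<Sum>a\<in>S. (f a)\<^sup>2) \<le> (\<Sum>a\<in>S. M\<^sup>2)"
    by (intro sum_mono) (metis abs_ge_zero order_trans power2_abs power_mono)
  then have "sqrt (\<Sum>a\<in>S. (f a)\<^sup>2) \<le> sqrt (real (card S) * M\<^sup>2)" by (intro real_sqrt_le_mono) simp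
  also have "\<dots> = sqrt (real (card S)) * M" using False S \<open>\<And>a. a \<in> S \<Longrightarrow> \<bar>f a\<bar> \<le> M\<close>
    by (simp add: real_sqrt_mult) (meson abs_ge_zero all_not_in_conv order_trans abs_of_nonneg)
  finally show ?thesis using False M_def by simp
qed



definition frob :: "nat \<Rightarrow> nat \<Rightarrow> (nat \<Rightarrow> nat \<Rightarrow> real) \<Rightarrow> real" where
  "frob m n A = sqrt (\<Sum>i<m. \<Sum>j<n. (A i j)\<^sup>2)"

lemma frob_nonneg: "frob m n A \<ge> 0"
  unfolding frob_def by (intro real_sqrt_ge_zero sum_nonneg) auto

lemma frob_cart: "frob m n A = sqrt (\<Sum>p\<in>{..<m} \<times> {..<n}. ((\<lambda>(i,j). A i j) p)\<^sup>2)"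
  unfolding frob_def by (simp add: sum.cartesian_product case_prod_beta)

lemma mat_bound: "l2norm m (\<lambda>i. \<Sum>j<n. A i j * d j) \<le> frob m n A * l2norm n d"
proof -
  have "(\<Sum>i<m. (\<Sum>j<n. A i j * d j)\<^sup>2) \<le> (\<Sum>i<m. (\<Sum>j<n. (A i j)\<^sup>2) * (\<Sum>j<n. (d j)\<^sup>2))"
    by (intro sum_mono Cauchy_Schwarz_ineq_sum)
  also have "\<dots> = (\<Sum>i<m. \<Sum>j<n. (A i j)\<^sup>2) * (\<Sum>j<n. (d j)\<^sup>2)"
    by (simp add: sum_distrib_right)
  finally have "sqrt (\<Sum>i<m. (\<Sum>j<n. A i j * d j)\<^sup>2) \<le> sqrt ((\<Sum>i<m. \<Sum>j<n. (A i j)\<^sup>2) * (\<Sum>j<n. (d j)\<^sup>2))"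
    by (rule real_sqrt_le_mono)
  then show ?thesis unfolding l2norm_def frob_def by (simp add: real_sqrt_mult)
qed

lemma l2norm_mono:
  assumes "\<And>i. i < m \<Longrightarrow> \<bar>u i\<bar> \<le> \<bar>v i\<bar>"
  shows "l2norm m u \<le> l2norm m v"
  unfolding l2norm_def
proof (intro real_sqrt_le_mono sum_mono)
  fix i assume "i \<in> {..<m}"
  then have h: "\<bar>u i\<bar> \<le> \<bar>v i\<bar>" using assms by simp
  have "\<bar>u i\<bar>\<^sup>2 \<le> \<bar>v i\<bar>\<^sup>2" by (rule power_mono[OF h]) simp
  then show "(u i)\<^sup>2 \<le> (v i)\<^sup>2" by simp
qed

lemma relu_lip: "\<bar>relu a - relu b\<bar> \<le> \<bar>a - b\<bar>"
  unfolding relu_def by linarith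

lemma layer:
  "l2norm (N (Suc k)) (\<lambda>i. nn_state L N W b x (Suc k) i - nn_state L N W b y (Suc k) i)
   \<le> frob (N (Suc k)) (N k) (W (Suc k)) * l2norm (N k) (\<lambda>i. nn_state L N W b x k i - nn_state L N W b y k i)"
proof -
  let ?sx = "nn_state L N W b x k" and ?sy = "nn_state L N W b y k"
  let ?d = "\<lambda>j. ?sx j - ?sy j"
  have "l2norm (N (Suc k)) (\<lambda>i. nn_state L N W b x (Suc k) i - nn_state L N W b y (Suc k) i)
     \<le> l2norm (N (Suc k)) (\<lambda>i. \<Sum>j<N k. W (Suc k) i j * ?d j)"
  proof (rule l2norm_mono)
    fix i assume i: "i < N (Suc k)"
    have e: "(\<Sum>j<N k. W (Suc k) i j * ?sx j) + b (Suc k) i - ((\<Sum>j<N k. W (Suc k) i j * ?sy j) + b (Suc k) i)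
        = (\<Sum>j<N k. W (Suc k) i j * ?d j)"
      by (simp add: sum_subtractf[symmetric] right_diff_distrib)
    show "\<bar>nn_state L N W b x (Suc k) i - nn_state L N W b y (Suc k) i\<bar> \<le> \<bar>\<Sum>j<N k. W (Suc k) i j * ?d j\<bar>"
    proof -
      define zx where "zx = (\<Sum>j<N k. W (Suc k) i j * ?sx j) + b (Suc k) i"
      define zy where "zy = (\<Sum>j<N k. W (Suc k) i j * ?sy j) + b (Suc k) i"
      have sx: "nn_state L N W b x (Suc k) i = (if Suc k < L then relu zx else zx)"
        using i by (simp add: affine_map_def Let_def zx_def)
      have sy: "nn_state L N W b y (Suc k) i = (if Suc k < L then relu zy else zy)"
        using i by (simp add: affine_map_def Let_def zy_def)
      have "zx - zy = (\<Sum>j<N k. W (Suc k) i j * ?d j)" using e zx_def zy_def by simp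
      then show ?thesis unfolding sx sy using relu_lip[of zx zy] by auto
    qed
  qed
  also have "\<dots> \<le> frob (N (Suc k)) (N k) (W (Suc k)) * l2norm (N k) ?d" by (rule mat_bound)
  finally show ?thesis .
qed

lemma layers:
  "l2norm (N k) (\<lambda>i. nn_state L N W b x k i - nn_state L N W b y k i)
   \<le> (\<Prod>i\<in>{1..k}. frob (N i) (N (i-1)) (W i)) * l2norm (N 0) (\<lambda>i. x i - y i)"
proof (induction k)
  case 0
  have "l2norm (N 0) (\<lambda>i. nn_state L N W b x 0 i - nn_state L N W b y 0 i) = l2norm (N 0) (\<lambda>i. x i - y i)"
    unfolding l2norm_def by (intro arg_cong[where f=sqrt] sum.cong) auto
  then show ?case by simp
next
  case (Suc k)
  have "l2norm (N (Suc k)) (\<lambda>i. nn_state L N W b x (Suc k) i - nn_state L N W b y (Suc k) i)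
     \<le> frob (N (Suc k)) (N k) (W (Suc k)) * l2norm (N k) (\<lambda>i. nn_state L N W b x k i - nn_state L N W b y k i)"
    by (rule layer)
  also have "\<dots> \<le> frob (N (Suc k)) (N k) (W (Suc k)) * ((\<Prod>i\<in>{1..k}. frob (N i) (N (i-1)) (W i)) * l2norm (N 0) (\<lambda>i. x i - y i))"
    by (intro mult_left_mono Suc.IH frob_nonneg)
  also have "\<dots> = (\<Prod>i\<in>{1..Suc k}. frob (N i) (N (i-1)) (W i)) * l2norm (N 0) (\<lambda>i. x i - y i)"
    by (simp add: prod.cl_ivl_Suc)
  finally show ?case .
qed

lemma lip_le:
  assumes "\<And>x y. l2norm k (\<lambda>i. f x i - f y i) \<le> K * l2norm d (\<lambda>i. x i - y i)"
  shows "lip_l2 d k f \<le> ereal K"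
  unfolding lip_l2_def
proof (rule Sup_least, clarify)
  fix x y assume x: "x \<in> vecspace d" and y: "y \<in> vecspace d" and xy: "x \<noteq> y"
  obtain i where i: "x i \<noteq> y i" using xy by auto
  have id: "i < d"
  proof (rule ccontr)
    assume "\<not> i < d"
    then have "x i = 0" "y i = 0" using x y unfolding vecspace_def by auto
    with i show False by simp
  qed
  have "0 < (\<Sum>j<d. (x j - y j)\<^sup>2)"
    by (rule sum_pos2[of _ i]) (use i id in auto)
  then have pos: "l2norm d (\<lambda>i. x i - y i) > 0" unfolding l2norm_def by simp
  show "ereal (l2norm k (\<lambda>i. f x i - f y i) / l2norm d (\<lambda>i. x i - y i)) \<le> ereal K"
    using assms[of x y] pos by (simp add: pos_divide_le_eq)
qed



lemma frob_small:
  assumes "1 \<le> q" "q \<le> 2"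
  shows "frob m n A \<le> mat_lq_norm q m n A"
proof -
  obtain p where q: "q = ereal p" using assms by (cases q) auto
  have p: "1 \<le> p" "p \<le> 2" using assms q by auto
  show ?thesis unfolding frob_cart mat_lq_norm_def lq_norm_def using q p
    by (simp add: gA)
qed

lemma frob_large:
  assumes "2 \<le> q"
  shows "frob m n A \<le> real (m * n) powr (lip_exponent q / 2) * mat_lq_norm q m n A"
proof (cases q)
  case (real p)
  then have p: "2 \<le> p" using assms by auto
  have e: "lip_exponent q / 2 = 1/2 - 1/p" unfolding lip_exponent_def using real p by auto
  show ?thesis unfolding frob_cart mat_lq_norm_def lq_norm_def e using real p
    gB[of "{..<m} \<times> {..<n}" p "\<lambda>(i,j). A i j"] by (simp add: card_cartesian_product)
next
  case PInf
  have e: "lip_exponent q / 2 = 1/2" unfolding lip_exponent_def using PInf by auto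
  show ?thesis unfolding frob_cart mat_lq_norm_def lq_norm_def e using PInf
    gC[of "{..<m} \<times> {..<n}" "\<lambda>(i,j). A i j"] by (simp add: card_cartesian_product powr_half_sqrt)
next
  case MInf then show ?thesis using assms by simp
qed

lemma prodN: "(\<Prod>i\<in>{1..Suc k}. real (N i * N (i-1))) = real (N 0 * N (Suc k)) * (\<Prod>i\<in>{1..k}. real (N i))^2"
proof (induction k)
  case 0 then show ?case by simp
next
  case (Suc k)
  have a: "(\<Prod>i\<in>{1..Suc (Suc k)}. real (N i * N (i-1))) = (\<Prod>i\<in>{1..Suc k}. real (N i * N (i-1))) * real (N (Suc (Suc k)) * N (Suc k))"
    by (subst prod.cl_ivl_Suc) simp
  have b: "(\<Prod>i\<in>{1..Suc k}. real (N i)) = (\<Prod>i\<in>{1..k}. real (N i)) * real (N (Suc k))"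
    by (subst prod.cl_ivl_Suc) simp
  show ?case unfolding a b Suc.IH by (simp add: power2_eq_square)
qed



theorem lemma2p8:
  fixes L :: nat and N :: "nat \<Rightarrow> nat" and q :: ereal and c :: real
    and W :: "nat \<Rightarrow> nat \<Rightarrow> nat \<Rightarrow> real" and b :: "nat \<Rightarrow> nat \<Rightarrow> real"
  assumes "L \<ge> 1" and "1 \<le> q" and "c > 0"
    and "net_lq_norm q L N W b \<le> c"
  shows "(q \<le> 2 \<longrightarrow> lip_l2 (N 0) (N L) (realization L N W b) \<le> ereal (c ^ L))
       \<and> (q \<ge> 2 \<longrightarrow> lip_l2 (N 0) (N L) (realization L N W b)
             \<le> ereal (c ^ L * (sqrt (real (N 0 * N L)) * (\<Prod>i\<in>{1..L-1}. real (N i)))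
                              powr lip_exponent q))"
proof -
  define F where "F i = frob (N i) (N (i-1)) (W i)" for i
  define P where "P = (\<Prod>i\<in>{1..L}. F i)"
  have lipP: "lip_l2 (N 0) (N L) (realization L N W b) \<le> ereal P"
    unfolding P_def F_def realization_def by (rule lip_le, rule layers)
  have mc: "mat_lq_norm q (N i) (N (i-1)) (W i) \<le> c" if "i \<in> {1..L}" for i
  proof -
    have "max (mat_lq_norm q (N i) (N (i - 1)) (W i)) (vec_lq_norm q (N i) (b i)) \<le> net_lq_norm q L N W b"
      unfolding net_lq_norm_def by (rule Max_ge) (use that in auto)
    then show ?thesis using assms(4) by linarith
  qed
  have F0: "0 \<le> F i" for i unfolding F_def by (rule frob_nonneg)
  have small: "lip_l2 (N 0) (N L) (realization L N W b) \<le> ereal (c ^ L)" if "q \<le> 2"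
  proof -
    have "P \<le> (\<Prod>i\<in>{1..L}. c)" unfolding P_def
      by (intro prod_mono conjI F0) (unfold F_def, rule order_trans[OF frob_small mc], use assms that in auto)
    then show ?thesis using lipP by (simp add: order_trans)
  qed
  have large: "lip_l2 (N 0) (N L) (realization L N W b)
             \<le> ereal (c ^ L * (sqrt (real (N 0 * N L)) * (\<Prod>i\<in>{1..L-1}. real (N i))) powr lip_exponent q)"
    if q2: "q \<ge> 2"
  proof -
    define e where "e = lip_exponent q"
    have "P \<le> (\<Prod>i\<in>{1..L}. real (N i * N (i-1)) powr (e/2) * c)" unfolding P_def
    proof (intro prod_mono conjI F0)
      fix i assume i: "i \<in> {1..L}"
      have "F i \<le> real (N i * N (i-1)) powr (e/2) * mat_lq_norm q (N i) (N (i-1)) (W i)"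
        unfolding F_def e_def by (rule frob_large[OF q2])
      also have "\<dots> \<le> real (N i * N (i-1)) powr (e/2) * c"
        by (intro mult_left_mono mc i) simp
      finally show "F i \<le> real (N i * N (i-1)) powr (e/2) * c" .
    qed
    also have "\<dots> = (\<Prod>i\<in>{1..L}. real (N i * N (i-1))) powr (e/2) * c ^ L"
      by (simp only: prod.distrib prod_powr_distrib[symmetric] prod_constant card_atLeastAtMost) simp
    also have "(\<Prod>i\<in>{1..L}. real (N i * N (i-1))) = real (N 0 * N L) * (\<Prod>i\<in>{1..L-1}. real (N i))^2"
      using prodN[of N "L-1"] assms(1) by simp
    also have "(real (N 0 * N L) * (\<Prod>i\<in>{1..L-1}. real (N i))^2) powr (e/2)
        = (sqrt (real (N 0 * N L)) * (\<Prod>i\<in>{1..L-1}. real (N i))) powr e"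
    proof -
      define Q where "Q = (\<Prod>i\<in>{1..L-1}. real (N i))"
      have Q0: "Q \<ge> 0" unfolding Q_def by (intro prod_nonneg) auto
      have "sqrt (real (N 0 * N L)) * Q = sqrt (real (N 0 * N L) * Q^2)"
        using Q0 by (simp add: real_sqrt_mult)
      also have "\<dots> = (real (N 0 * N L) * Q^2) powr (1/2)" by (simp add: powr_half_sqrt)
      finally have "(sqrt (real (N 0 * N L)) * Q) powr e = (real (N 0 * N L) * Q^2) powr (e/2)"
        by (simp add: powr_powr)
      then show ?thesis unfolding Q_def by simp
    qed
    finally have "P \<le> c ^ L * (sqrt (real (N 0 * N L)) * (\<Prod>i\<in>{1..L-1}. real (N i))) powr e"
      by (simp add: mult.commute)
    then show ?thesis using lipP unfolding e_def by (simp add: order_trans)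
  qed
  show ?thesis using small large by blast
qed


end
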